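(* Let $X\subseteq\mathbb{C}^n$ be a complex analytic variety with coordinates $z_1,\dots,z_n$, $x\in X$, $M$ an $\mathcal{O}_{X,x}$-submodule of $\mathcal{O}_{X,x}^p$ with matrix of generators $[M]=[g_1\cdots g_r]$, and $k\in\mathbb{N}$. Let $[M_D]=\begin{bmatrix}[M] & 0\\ [M]' & [\tilde M]\end{bmatrix}$, where $[\tilde M]$ is the $p\times nr$ matrix with columns $(z_i-z_i')g_j'$, $i=1,\dots,n$, $j=1,\dots,r$. Let $\mathcal{I}_{2k}(M_D)$ be the ideal of $\mathcal{O}_{X\times X,(x,x)}$ generated by $\{\det(M_{IJ})\det(\tilde M_{KL}): I,J,K,L\text{ are }k\text{-indexes}\}$. Then $\mathcal{I}_{2k}(M_D)\subseteq I_\Delta^{k-1}\,I_2((I_k(M))_D)$.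
   Context: $\pi_1,\pi_2:X\times X\to X$ are projections; for an object $A$ on $X$, $A$ also denotes $A\circ\pi_1$ and $A'$ denotes $A\circ\pi_2$. The matrix $[M_D]$ above is a matrix of generators of $M_D$, the submodule of $\mathcal{O}_{X\times X,(x,x)}^{2p}$ generated by $h_D=(h\circ\pi_1,h\circ\pi_2)$, $h\in M$. For a matrix $A$ and $k$-indexes $I,J$, $A_{IJ}$ is the submatrix with rows $I$ and columns $J$. $I_\Delta$ is the ideal generated by $z_i-z_i'$, $i=1,\dots,n$. $I_k(M)$ is the ideal of $k\times k$ minors of $[M]$, $(I_k(M))_D\subseteq\mathcal{O}^2_{X\times X,(x,x)}$ is generated by $(f\circ\pi_1,f\circ\pi_2)$, $f\in I_k(M)$, and $I_2(\cdot)$ denotes the ideal of $2\times 2$ minors. *)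

theory Defs
  imports "HOL-Analysis.Analysis"
begin

text \<open>Holomorphy on an open set U of a finite-dimensional complex vector space, given by a
complex scalar action sc: complex Frechet differentiability at every point
(real derivative that is complex linear).\<close>
definition cholo :: "(complex \<Rightarrow> 'a \<Rightarrow> 'a) \<Rightarrow> ('a::real_normed_vector \<Rightarrow> complex) \<Rightarrow> 'a set \<Rightarrow> bool" where
  "cholo sc f U \<longleftrightarrow> (\<forall>z\<in>U. \<exists>L. (f has_derivative L) (at z) \<and> (\<forall>c v. L (sc c v) = c * L v))"

definition sc_vec :: "complex \<Rightarrow> complex^'n \<Rightarrow> complex^'n" where
  "sc_vec c v = c *s v"

definition sc_pair :: "complex \<Rightarrow> (complex^'n) \<times> (complex^'n) \<Rightarrow> (complex^'n) \<times> (complex^'n)" where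
  "sc_pair c w = (c *s fst w, c *s snd w)"

definition analytic_variety :: "(complex^'n) set \<Rightarrow> bool" where
  "analytic_variety X \<longleftrightarrow> (\<forall>a\<in>X. \<exists>U fs. open U \<and> a \<in> U \<and> finite fs \<and>
      (\<forall>f\<in>fs. cholo sc_vec f U) \<and> X \<inter> U = {z\<in>U. \<forall>f\<in>fs. f z = 0})"

text \<open>f represents an element of the local ring O_{S,a}: it agrees on S near a with a holomorphic function.\<close>
definition is_germ :: "(complex \<Rightarrow> 'a \<Rightarrow> 'a) \<Rightarrow> 'a::real_normed_vector set \<Rightarrow> 'a \<Rightarrow> ('a \<Rightarrow> complex) \<Rightarrow> bool" where
  "is_germ sc S a f \<longleftrightarrow> (\<exists>U F. open U \<and> a \<in> U \<and> cholo sc F U \<and> (\<forall>y\<in>S \<inter> U. f y = F y))"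

text \<open>The ideal of O_{S,a} generated by a set G of germs (as a set of representatives,
closed under equality of germs).\<close>
definition gen_ideal :: "(complex \<Rightarrow> 'a \<Rightarrow> 'a) \<Rightarrow> 'a::real_normed_vector set \<Rightarrow> 'a \<Rightarrow> ('a \<Rightarrow> complex) set \<Rightarrow> ('a \<Rightarrow> complex) set" where
  "gen_ideal sc S a G = {h. \<exists>T c. finite T \<and> T \<subseteq> G \<and> (\<forall>t\<in>T. is_germ sc S a (c t)) \<and>
      (\<exists>U. open U \<and> a \<in> U \<and> (\<forall>y\<in>S \<inter> U. h y = (\<Sum>t\<in>T. c t y * t y)))}"

definition enum_set :: "'a set \<Rightarrow> 'a list" where
  "enum_set S = (SOME xs. distinct xs \<and> set xs = S)"

text \<open>Minor of a matrix with rows I and columns J (in a fixed order), via the Leibniz formula.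
The ordering only affects the sign, hence not the ideals generated by minors.\<close>
definition minor :: "('r \<Rightarrow> 'c \<Rightarrow> 'e::comm_ring_1) \<Rightarrow> 'r set \<Rightarrow> 'c set \<Rightarrow> 'e" where
  "minor A I J = (let is = enum_set I; js = enum_set J; m = length is in
     (\<Sum>\<sigma> | \<sigma> permutes {..<m}. of_int (sign \<sigma>) * (\<Prod>a<m. A (is ! a) (js ! (\<sigma> a)))))"

definition kidx :: "nat \<Rightarrow> 'a set \<Rightarrow> 'a set set" where
  "kidx k A = {I. I \<subseteq> A \<and> card I = k}"

text \<open>[M] is given by g a j (row a < p, column j < r), entries in O_{X,x}.
I_k(M): ideal of O_{X,x} generated by the k x k minors of [M].\<close>
definition Ik :: "(complex^'n) set \<Rightarrow> complex^'n \<Rightarrow> nat \<Rightarrow> nat \<Rightarrow> (nat \<Rightarrow> nat \<Rightarrow> complex^'n \<Rightarrow> complex) \<Rightarrow> nat \<Rightarrow> (complex^'n \<Rightarrow> complex) set" where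
  "Ik X x p r g k = gen_ideal sc_vec X x
     {(\<lambda>z. minor (\<lambda>a j. g a j z) I J) | I J. I \<in> kidx k {..<p} \<and> J \<in> kidx k {..<r}}"

definition Mtilde :: "(nat \<Rightarrow> nat \<Rightarrow> complex^'n \<Rightarrow> complex) \<Rightarrow> nat \<Rightarrow> 'n \<times> nat \<Rightarrow> (complex^'n) \<times> (complex^'n) \<Rightarrow> complex" where
  "Mtilde g a c w = (fst w $ fst c - snd w $ fst c) * g a (snd c) (snd w)"

definition I2k_MD :: "(complex^'n) set \<Rightarrow> complex^'n \<Rightarrow> nat \<Rightarrow> nat \<Rightarrow> (nat \<Rightarrow> nat \<Rightarrow> complex^'n \<Rightarrow> complex) \<Rightarrow> nat \<Rightarrow> ((complex^'n) \<times> (complex^'n) \<Rightarrow> complex) set" where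
  "I2k_MD X x p r g k = gen_ideal sc_pair (X \<times> X) (x, x)
     {(\<lambda>w. minor (\<lambda>a j. g a j (fst w)) I J * minor (\<lambda>a c. Mtilde g a c w) K L) | I J K L.
        I \<in> kidx k {..<p} \<and> J \<in> kidx k {..<r} \<and> K \<in> kidx k {..<p} \<and> L \<in> kidx k (UNIV \<times> {..<r})}"

text \<open>I_\<Delta>^{m} I_2(N_D) where N is an ideal of O_{X,x}: generated by the products of m generators
z_i - z_i' of I_\<Delta> with the 2x2 minors f h' - f' h of the generators (f,f'), (h,h') of N_D.\<close>
definition IDelta_pow_I2 :: "(complex^'n) set \<Rightarrow> complex^'n \<Rightarrow> nat \<Rightarrow> (complex^'n \<Rightarrow> complex) set \<Rightarrow> ((complex^'n) \<times> (complex^'n) \<Rightarrow> complex) set" where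
  "IDelta_pow_I2 X x m N = gen_ideal sc_pair (X \<times> X) (x, x)
     {(\<lambda>w. (\<Prod>t<m. fst w $ \<phi> t - snd w $ \<phi> t) * (f (fst w) * h (snd w) - f (snd w) * h (fst w))) | \<phi> f h.
        f \<in> N \<and> h \<in> N}"

end

theory Submission
  imports Defs
begin

section \<open>Germs\<close>

lemma germ_const: "is_germ sc S a (\<lambda>_. c)"
  unfolding is_germ_def cholo_def
  by (rule exI[of _ UNIV], rule exI[of _ "\<lambda>_. c"]) (auto intro!: exI[of _ "\<lambda>_. 0"])

lemma germ_if: "(P \<Longrightarrow> is_germ sc S a f) \<Longrightarrow> is_germ sc S a (\<lambda>y. if P then f y else 0)"
  by (cases P) (auto simp: germ_const)

lemma germ_mult:
  assumes "is_germ sc S a f" "is_germ sc S a g"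
  shows "is_germ sc S a (\<lambda>y. f y * g y)"
proof -
  obtain U1 F1 where 1: "open U1" "a \<in> U1" "cholo sc F1 U1" "\<forall>y\<in>S \<inter> U1. f y = F1 y"
    using assms(1) unfolding is_germ_def by blast
  obtain U2 F2 where 2: "open U2" "a \<in> U2" "cholo sc F2 U2" "\<forall>y\<in>S \<inter> U2. g y = F2 y"
    using assms(2) unfolding is_germ_def by blast
  have "cholo sc (\<lambda>y. F1 y * F2 y) (U1 \<inter> U2)"
    unfolding cholo_def
  proof
    fix z assume z: "z \<in> U1 \<inter> U2"
    obtain L1 where L1: "(F1 has_derivative L1) (at z)" "\<forall>c v. L1 (sc c v) = c * L1 v"
      using 1(3) z unfolding cholo_def by blast
    obtain L2 where L2: "(F2 has_derivative L2) (at z)" "\<forall>c v. L2 (sc c v) = c * L2 v"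
      using 2(3) z unfolding cholo_def by blast
    show "\<exists>L. ((\<lambda>y. F1 y * F2 y) has_derivative L) (at z) \<and> (\<forall>c v. L (sc c v) = c * L v)"
      apply (rule exI[of _ "\<lambda>h. F1 z * L2 h + L1 h * F2 z"])
      using has_derivative_mult[OF L1(1) L2(1)] L1(2) L2(2)
      by (auto simp: algebra_simps)
  qed
  then show ?thesis unfolding is_germ_def using 1 2
    by (intro exI[of _ "U1 \<inter> U2"] exI[of _ "\<lambda>y. F1 y * F2 y"]) auto
qed

lemma germ_add:
  assumes "is_germ sc S a f" "is_germ sc S a g"
  shows "is_germ sc S a (\<lambda>y. f y + g y)"
proof -
  obtain U1 F1 where 1: "open U1" "a \<in> U1" "cholo sc F1 U1" "\<forall>y\<in>S \<inter> U1. f y = F1 y"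
    using assms(1) unfolding is_germ_def by blast
  obtain U2 F2 where 2: "open U2" "a \<in> U2" "cholo sc F2 U2" "\<forall>y\<in>S \<inter> U2. g y = F2 y"
    using assms(2) unfolding is_germ_def by blast
  have "cholo sc (\<lambda>y. F1 y + F2 y) (U1 \<inter> U2)"
    unfolding cholo_def
  proof
    fix z assume z: "z \<in> U1 \<inter> U2"
    obtain L1 where L1: "(F1 has_derivative L1) (at z)" "\<forall>c v. L1 (sc c v) = c * L1 v"
      using 1(3) z unfolding cholo_def by blast
    obtain L2 where L2: "(F2 has_derivative L2) (at z)" "\<forall>c v. L2 (sc c v) = c * L2 v"
      using 2(3) z unfolding cholo_def by blast
    show "\<exists>L. ((\<lambda>y. F1 y + F2 y) has_derivative L) (at z) \<and> (\<forall>c v. L (sc c v) = c * L v)"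
      apply (rule exI[of _ "\<lambda>h. L1 h + L2 h"])
      using has_derivative_add[OF L1(1) L2(1)] L1(2) L2(2)
      by (auto simp: algebra_simps)
  qed
  then show ?thesis unfolding is_germ_def using 1 2
    by (intro exI[of _ "U1 \<inter> U2"] exI[of _ "\<lambda>y. F1 y + F2 y"]) auto
qed

lemma germ_coord: "is_germ sc_vec S a (\<lambda>z. z $ i)"
  unfolding is_germ_def cholo_def
  apply (rule exI[of _ UNIV], rule exI[of _ "\<lambda>z. z $ i"])
  apply (auto simp: sc_vec_def)
  apply (rule exI[of _ "\<lambda>z. z $ i"])
  apply (auto intro: bounded_linear_imp_has_derivative)
  done

lemma germ_delta: fixes i :: "'n::finite" shows "is_germ sc_pair S a (\<lambda>w. fst w $ i - snd w $ i)"
proof -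
  have bl: "bounded_linear (\<lambda>w::(complex^'n) \<times> (complex^'n). fst w $ i - snd w $ i)"
    by (intro bounded_linear_sub bounded_linear_compose[OF bounded_linear_vec_nth]
        bounded_linear_fst bounded_linear_snd)
  show ?thesis
    unfolding is_germ_def cholo_def
    apply (rule exI[of _ UNIV], rule exI[of _ "\<lambda>w. fst w $ i - snd w $ i"])
    apply (auto simp: sc_pair_def)
    apply (rule exI[of _ "\<lambda>w. fst w $ i - snd w $ i"])
    apply (auto intro: bounded_linear_imp_has_derivative[OF bl] simp: algebra_simps)
    done
qed

section \<open>Ideals\<close>

lemma gi_zero: "(\<lambda>_. 0) \<in> gen_ideal sc S a G"
  unfolding gen_ideal_def
  apply (rule CollectI)
  apply (rule exI[of _ "{}"], rule exI[of _ "\<lambda>_ _. 0"])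
  apply (auto intro!: exI[of _ UNIV])
  done

lemma gi_gen: "t \<in> G \<Longrightarrow> t \<in> gen_ideal sc S a G"
  unfolding gen_ideal_def
  apply (rule CollectI)
  apply (rule exI[of _ "{t}"], rule exI[of _ "\<lambda>_ _. 1"])
  apply (auto intro!: exI[of _ UNIV] germ_const)
  done

lemma gi_cong:
  assumes "h \<in> gen_ideal sc S a G" "open U" "a \<in> U" "\<forall>y\<in>S \<inter> U. h' y = h y"
  shows "h' \<in> gen_ideal sc S a G"
proof -
  obtain T c U1 where T: "finite T" "T \<subseteq> G" "\<forall>t\<in>T. is_germ sc S a (c t)"
    "open U1" "a \<in> U1" "\<forall>y\<in>S \<inter> U1. h y = (\<Sum>t\<in>T. c t y * t y)"
    using assms(1) unfolding gen_ideal_def by blast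
  show ?thesis unfolding gen_ideal_def
    using T assms(2-4) by (intro CollectI exI[of _ T] exI[of _ c] conjI exI[of _ "U \<inter> U1"]) auto
qed

lemma gi_mult:
  assumes "is_germ sc S a q" "h \<in> gen_ideal sc S a G"
  shows "(\<lambda>y. q y * h y) \<in> gen_ideal sc S a G"
proof -
  obtain T c U1 where T: "finite T" "T \<subseteq> G" "\<forall>t\<in>T. is_germ sc S a (c t)"
    "open U1" "a \<in> U1" "\<forall>y\<in>S \<inter> U1. h y = (\<Sum>t\<in>T. c t y * t y)"
    using assms(2) unfolding gen_ideal_def by blast
  show ?thesis unfolding gen_ideal_def
    using T assms(1)
    by (intro CollectI exI[of _ T] exI[of _ "\<lambda>t y. q y * c t y"] conjI exI[of _ U1])
       (auto intro: germ_mult simp: sum_distrib_left mult.assoc)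
qed

lemma gi_add:
  assumes "h1 \<in> gen_ideal sc S a G" "h2 \<in> gen_ideal sc S a G"
  shows "(\<lambda>y. h1 y + h2 y) \<in> gen_ideal sc S a G"
proof -
  obtain T1 c1 U1 where T1: "finite T1" "T1 \<subseteq> G" "\<forall>t\<in>T1. is_germ sc S a (c1 t)"
    "open U1" "a \<in> U1" "\<forall>y\<in>S \<inter> U1. h1 y = (\<Sum>t\<in>T1. c1 t y * t y)"
    using assms(1) unfolding gen_ideal_def by blast
  obtain T2 c2 U2 where T2: "finite T2" "T2 \<subseteq> G" "\<forall>t\<in>T2. is_germ sc S a (c2 t)"
    "open U2" "a \<in> U2" "\<forall>y\<in>S \<inter> U2. h2 y = (\<Sum>t\<in>T2. c2 t y * t y)"
    using assms(2) unfolding gen_ideal_def by blast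
  define c where "c t = (\<lambda>y. (if t \<in> T1 then c1 t y else 0) + (if t \<in> T2 then c2 t y else 0))" for t
  have germ: "is_germ sc S a (c t)" if "t \<in> T1 \<union> T2" for t
    unfolding c_def
    by (rule germ_add; rule germ_if) (use T1(3) T2(3) that in auto)
  have sum: "(\<Sum>t\<in>T1 \<union> T2. c t y * t y) = (\<Sum>t\<in>T1. c1 t y * t y) + (\<Sum>t\<in>T2. c2 t y * t y)" for y
  proof -
    have "(\<Sum>t\<in>T1 \<union> T2. c t y * t y) = (\<Sum>t\<in>T1 \<union> T2. (if t \<in> T1 then c1 t y * t y else 0))
         + (\<Sum>t\<in>T1 \<union> T2. (if t \<in> T2 then c2 t y * t y else 0))"
      unfolding c_def sum.distrib[symmetric] by (rule sum.cong) (auto simp: distrib_right)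
    also have "\<dots> = (\<Sum>t\<in>(T1 \<union> T2) \<inter> T1. c1 t y * t y) + (\<Sum>t\<in>(T1 \<union> T2) \<inter> T2. c2 t y * t y)"
      using T1(1) T2(1) by (simp only: sum.inter_restrict finite_UnI)
    also have "\<dots> = (\<Sum>t\<in>T1. c1 t y * t y) + (\<Sum>t\<in>T2. c2 t y * t y)"
    proof -
      have e1: "(T1 \<union> T2) \<inter> T1 = T1" "(T1 \<union> T2) \<inter> T2 = T2" by blast+
      show ?thesis by (simp only: e1)
    qed
    finally show ?thesis .
  qed
  show ?thesis unfolding gen_ideal_def
    using T1 T2 germ sum
    by (intro CollectI exI[of _ "T1 \<union> T2"] exI[of _ c] conjI exI[of _ "U1 \<inter> U2"]) auto
qed

lemma gi_mono:
  assumes "G \<subseteq> gen_ideal sc S a G'"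
  shows "gen_ideal sc S a G \<subseteq> gen_ideal sc S a G'"
proof
  fix h assume "h \<in> gen_ideal sc S a G"
  then obtain T c U1 where T: "finite T" "T \<subseteq> G" "\<forall>t\<in>T. is_germ sc S a (c t)"
    "open U1" "a \<in> U1" "\<forall>y\<in>S \<inter> U1. h y = (\<Sum>t\<in>T. c t y * t y)"
    unfolding gen_ideal_def by blast
  have "T \<subseteq> G \<Longrightarrow> (\<forall>t\<in>T. is_germ sc S a (c t)) \<Longrightarrow> (\<lambda>y. \<Sum>t\<in>T. c t y * t y) \<in> gen_ideal sc S a G'"
    using T(1)
  proof (induction T rule: finite_induct)
    case empty then show ?case using gi_zero by simp
  next
    case (insert t T)
    have t1: "t \<in> gen_ideal sc S a G'" using assms insert.prems by auto
    have t2: "(\<lambda>y. c t y * t y) \<in> gen_ideal sc S a G'"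
      by (rule gi_mult[OF _ t1]) (use insert.prems in simp)
    have t3: "(\<lambda>y. \<Sum>t\<in>T. c t y * t y) \<in> gen_ideal sc S a G'"
      using insert.IH insert.prems by simp
    have "(\<lambda>y. \<Sum>t\<in>insert t T. c t y * t y) = (\<lambda>y. c t y * t y + (\<Sum>t\<in>T. c t y * t y))"
      using insert.hyps by simp
    then show ?case using gi_add[OF t2 t3] by simp
  qed
  then have hs: "(\<lambda>y. \<Sum>t\<in>T. c t y * t y) \<in> gen_ideal sc S a G'" using T(2,3) by blast
  show "h \<in> gen_ideal sc S a G'"
    by (rule gi_cong[OF hs T(4) T(5)]) (use T(6) in simp)
qed

section \<open>Leibniz determinants of lists\<close>

definition D :: "('r \<Rightarrow> 'c \<Rightarrow> complex) \<Rightarrow> 'r list \<Rightarrow> 'c list \<Rightarrow> complex" where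
  "D A xs ys = (\<Sum>\<sigma> | \<sigma> permutes {..<length xs}. of_int (sign \<sigma>) * (\<Prod>a<length xs. A (xs ! a) (ys ! (\<sigma> a))))"

lemma minor_D: "minor A I J = D A (enum_set I) (enum_set J)"
  unfolding minor_def D_def Let_def ..

lemma D_map:
  assumes "length ys = length xs"
  shows "D (\<lambda>a c. A a (f c)) xs ys = D A xs (map f ys)"
  unfolding D_def
proof (rule sum.cong[OF refl])
  fix \<sigma> assume "\<sigma> \<in> {\<sigma>. \<sigma> permutes {..<length xs}}"
  then have s: "\<sigma> permutes {..<length xs}" by simp
  show "of_int (sign \<sigma>) * (\<Prod>a<length xs. A (xs ! a) (f (ys ! \<sigma> a))) =
        of_int (sign \<sigma>) * (\<Prod>a<length xs. A (xs ! a) (map f ys ! \<sigma> a))"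
    using permutes_in_image[OF s] assms by (auto intro!: prod.cong)
qed

lemma D_scale:
  assumes "length ys = length xs"
  shows "D (\<lambda>a c. s c * A a c) xs ys = (\<Prod>a<length xs. s (ys ! a)) * D A xs ys"
  unfolding D_def sum_distrib_left
proof (rule sum.cong[OF refl])
  fix \<sigma> assume "\<sigma> \<in> {\<sigma>. \<sigma> permutes {..<length xs}}"
  then have sg: "\<sigma> permutes {..<length xs}" by simp
  have "(\<Prod>a<length xs. s (ys ! \<sigma> a)) = (\<Prod>a<length xs. s (ys ! a))"
    using prod.reindex_bij_betw[OF permutes_imp_bij[OF sg], of "\<lambda>a. s (ys ! a)"] .
  then show "of_int (sign \<sigma>) * (\<Prod>a<length xs. s (ys ! \<sigma> a) * A (xs ! a) (ys ! \<sigma> a)) =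
    (\<Prod>a<length xs. s (ys ! a)) * (of_int (sign \<sigma>) * (\<Prod>a<length xs. A (xs ! a) (ys ! \<sigma> a)))"
    by (simp add: prod.distrib)
qed

lemma D_repeat:
  assumes "length ys = length xs" "\<not> distinct ys"
  shows "D A xs ys = 0"
proof -
  let ?m = "length xs"
  obtain i j where ij: "i < ?m" "j < ?m" "i \<noteq> j" "ys ! i = ys ! j"
    using assms by (auto simp: distinct_conv_nth)
  define \<tau> where "\<tau> = Transposition.transpose i j"
  have tp: "\<tau> permutes {..<?m}" unfolding \<tau>_def using ij by (intro permutes_swap_id) auto
  have ys\<tau>: "ys ! \<tau> b = ys ! b" for b
    unfolding \<tau>_def using ij by (cases "b = i"; cases "b = j") auto
  have st: "sign \<tau> = -1" unfolding \<tau>_def using ij by (simp add: sign_swap_id)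
  let ?f = "\<lambda>\<sigma>. of_int (sign \<sigma>) * (\<Prod>a<?m. A (xs ! a) (ys ! (\<sigma> a)))"
  have "D A xs ys = sum ?f {\<sigma>. \<sigma> permutes {..<?m}}" unfolding D_def by simp
  also have "\<dots> = sum (\<lambda>\<sigma>. ?f (\<tau> \<circ> \<sigma>)) {\<sigma>. \<sigma> permutes {..<?m}}"
    by (rule setum_permutations_compose_left[OF tp])
  also have "\<dots> = sum (\<lambda>\<sigma>. - ?f \<sigma>) {\<sigma>. \<sigma> permutes {..<?m}}"
  proof (rule sum.cong[OF refl])
    fix \<sigma> assume "\<sigma> \<in> {\<sigma>. \<sigma> permutes {..<?m}}"
    then have sg: "\<sigma> permutes {..<?m}" by simp
    have "sign (\<tau> \<circ> \<sigma>) = sign \<tau> * sign \<sigma>"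
      by (rule sign_compose) (use tp sg in \<open>auto intro: permutes_imp_permutation\<close>)
    then show "?f (\<tau> \<circ> \<sigma>) = - ?f \<sigma>" using st ys\<tau> by simp
  qed
  also have "\<dots> = - D A xs ys" unfolding D_def by (simp add: sum_negf)
  finally show ?thesis by simp
qed

lemma D_perm:
  assumes "length ys = length xs" "length zs = length xs" "\<tau> permutes {..<length xs}"
    "\<forall>b<length xs. zs ! b = ys ! \<tau> b"
  shows "D A xs zs = of_int (sign \<tau>) * D A xs ys"
proof -
  let ?m = "length xs"
  let ?f = "\<lambda>\<sigma>. of_int (sign \<sigma>) * (\<Prod>a<?m. A (xs ! a) (zs ! (\<sigma> a)))"
  let ?g = "\<lambda>\<sigma>. of_int (sign \<sigma>) * (\<Prod>a<?m. A (xs ! a) (ys ! (\<sigma> a)))"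
  have ip: "inv \<tau> permutes {..<?m}" using permutes_inv[OF assms(3)] .
  have "D A xs zs = sum ?f {\<sigma>. \<sigma> permutes {..<?m}}" unfolding D_def by simp
  also have "\<dots> = sum (\<lambda>\<sigma>. ?f (inv \<tau> \<circ> \<sigma>)) {\<sigma>. \<sigma> permutes {..<?m}}"
    by (rule setum_permutations_compose_left[OF ip])
  also have "\<dots> = sum (\<lambda>\<sigma>. of_int (sign \<tau>) * ?g \<sigma>) {\<sigma>. \<sigma> permutes {..<?m}}"
  proof (rule sum.cong[OF refl])
    fix \<sigma> assume "\<sigma> \<in> {\<sigma>. \<sigma> permutes {..<?m}}"
    then have sg: "\<sigma> permutes {..<?m}" by simp
    have "sign (inv \<tau> \<circ> \<sigma>) = sign (inv \<tau>) * sign \<sigma>"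
      by (rule sign_compose) (use ip sg in \<open>auto intro: permutes_imp_permutation\<close>)
    also have "sign (inv \<tau>) = sign \<tau>"
      by (rule sign_inverse) (use assms(3) in \<open>auto intro: permutes_imp_permutation\<close>)
    finally have s1: "sign (inv \<tau> \<circ> \<sigma>) = sign \<tau> * sign \<sigma>" .
    have "zs ! (inv \<tau> (\<sigma> a)) = ys ! \<sigma> a" if "a < ?m" for a
    proof -
      have "\<sigma> a < ?m" using permutes_in_image[OF sg] that by simp
      then have "inv \<tau> (\<sigma> a) < ?m" using permutes_in_image[OF ip] by simp
      then have "zs ! (inv \<tau> (\<sigma> a)) = ys ! \<tau> (inv \<tau> (\<sigma> a))" using assms(4) by simp
      also have "\<tau> (inv \<tau> (\<sigma> a)) = \<sigma> a" using permutes_inverses(1)[OF assms(3)] .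
      finally show ?thesis .
    qed
    then have "(\<Prod>a<?m. A (xs ! a) (zs ! ((inv \<tau> \<circ> \<sigma>) a))) = (\<Prod>a<?m. A (xs ! a) (ys ! (\<sigma> a)))"
      by (intro prod.cong) auto
    then show "?f (inv \<tau> \<circ> \<sigma>) = of_int (sign \<tau>) * ?g \<sigma>" using s1 by simp
  qed
  also have "\<dots> = of_int (sign \<tau>) * D A xs ys" unfolding D_def by (simp add: sum_distrib_left)
  finally show ?thesis .
qed

lemma perm_exists:
  assumes "distinct zs" "distinct ys" "set zs = set ys"
  shows "\<exists>\<tau>. \<tau> permutes {..<length ys} \<and> (\<forall>b<length ys. zs ! b = ys ! \<tau> b)"
proof -
  let ?m = "length ys"
  have len: "length zs = ?m" using assms distinct_card by metis
  define \<tau> where "\<tau> b = (if b < ?m then (SOME c. c < ?m \<and> ys ! c = zs ! b) else b)" for b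
  have mem: "zs ! b \<in> set ys" if "b < ?m" for b using that len assms(3) nth_mem by metis
  have tc: "\<tau> b < ?m \<and> ys ! \<tau> b = zs ! b" if "b < ?m" for b
  proof -
    have "\<exists>c. c < ?m \<and> ys ! c = zs ! b" using mem[OF that] by (auto simp: in_set_conv_nth)
    then have "(SOME c. c < ?m \<and> ys ! c = zs ! b) < ?m \<and> ys ! (SOME c. c < ?m \<and> ys ! c = zs ! b) = zs ! b"
      by (rule someI_ex)
    then show ?thesis unfolding \<tau>_def using that by simp
  qed
  have img: "\<tau> ` {..<?m} \<subseteq> {..<?m}" using tc by auto
  have inj: "inj_on \<tau> {..<?m}"
  proof (rule inj_onI)
    fix a b assume ab: "a \<in> {..<?m}" "b \<in> {..<?m}" "\<tau> a = \<tau> b"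
    then have "zs ! a = zs ! b" using tc by (metis lessThan_iff)
    then show "a = b" using ab assms(1) len by (simp add: nth_eq_iff_index_eq)
  qed
  have "\<tau> ` {..<?m} = {..<?m}" using endo_inj_surj[OF _ img inj] by simp
  then have "bij_betw \<tau> {..<?m} {..<?m}" using inj by (simp add: bij_betw_def)
  then have "\<tau> permutes {..<?m}" by (rule bij_imp_permutes) (simp add: \<tau>_def)
  moreover have "\<forall>b<?m. zs ! b = ys ! \<tau> b" using tc by simp
  ultimately show ?thesis by blast
qed

lemma enum_set: "finite S \<Longrightarrow> distinct (enum_set S) \<and> set (enum_set S) = S"
  unfolding enum_set_def by (rule someI_ex) (use finite_distinct_list in blast)


lemma key_identity:
  fixes m m' h h' P a b :: complex
  shows "m * (P * (a - b) * h') = 1/2 * (P * (a * m * h' - b * m' * h)) +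
     (- 1/2 * (P * (m * (b * h') - m' * (a * h))) + 1/2 * (a - b) * (P * (m * h' - m' * h)))"
  by algebra

theorem lemma3p4:
  fixes X :: "(complex^'n) set" and x :: "complex^'n"
    and p r k :: nat and g :: "nat \<Rightarrow> nat \<Rightarrow> complex^'n \<Rightarrow> complex"
  assumes "analytic_variety X" and "x \<in> X"
    and "\<forall>a<p. \<forall>j<r. is_germ sc_vec X x (g a j)"
    and "k \<ge> 1"
  shows "I2k_MD X x p r g k \<subseteq> IDelta_pow_I2 X x (k - 1) (Ik X x p r g k)"
proof -
  let ?N = "Ik X x p r g k"
  let ?G2 = "{(\<lambda>w. (\<Prod>t<k - 1. fst w $ \<phi> t - snd w $ \<phi> t) * (f (fst w) * h (snd w) - f (snd w) * h (fst w))) | \<phi> f h.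
        f \<in> ?N \<and> h \<in> ?N}"
  let ?J = "gen_ideal sc_pair (X \<times> X) (x, x) ?G2"
  have Ngen: "(\<lambda>z. minor (\<lambda>a j. g a j z) I J) \<in> ?N" if "I \<in> kidx k {..<p}" "J \<in> kidx k {..<r}" for I J
    unfolding Ik_def by (rule gi_gen, rule CollectI, rule exI[of _ I], rule exI[of _ J]) (use that in simp)
  show ?thesis
    unfolding I2k_MD_def IDelta_pow_I2_def
  proof (rule gi_mono, rule subsetI)
    fix F assume "F \<in> {(\<lambda>w. minor (\<lambda>a j. g a j (fst w)) I J * minor (\<lambda>a c. Mtilde g a c w) K L) | I J K L.
        I \<in> kidx k {..<p} \<and> J \<in> kidx k {..<r} \<and> K \<in> kidx k {..<p} \<and> L \<in> kidx k (UNIV \<times> {..<r})}"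
    then obtain I J K L where F: "F = (\<lambda>w. minor (\<lambda>a j. g a j (fst w)) I J * minor (\<lambda>a c. Mtilde g a c w) K L)"
      and IJKL: "I \<in> kidx k {..<p}" "J \<in> kidx k {..<r}" "K \<in> kidx k {..<p}" "L \<in> kidx k (UNIV \<times> {..<r})"
      by blast
    define m1 where "m1 = (\<lambda>z. minor (\<lambda>a j. g a j z) I J)"
    have m1N: "m1 \<in> ?N" unfolding m1_def by (rule Ngen[OF IJKL(1,2)])
    define xs where "xs = enum_set K"
    define ys where "ys = enum_set L"
    have finK: "finite K"
    proof -
      have "K \<subseteq> {..<p}" using IJKL(3) unfolding kidx_def by simp
      then show ?thesis using finite_subset finite_lessThan by blast
    qed
    have finL: "finite L"
    proof -
      have "card L = k" using IJKL(4) unfolding kidx_def by simp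
      then have "card L \<noteq> 0" using assms(4) by simp
      then show ?thesis by (meson card.infinite)
    qed
    have xs: "distinct xs" "set xs = K" using enum_set[OF finK] unfolding xs_def by auto
    have ys: "distinct ys" "set ys = L" using enum_set[OF finL] unfolding ys_def by auto
    have lxs: "length xs = k"
    proof -
      have "card K = k" using IJKL(3) unfolding kidx_def by simp
      then show ?thesis using distinct_card[OF xs(1)] xs(2) by simp
    qed
    have lys: "length ys = k"
    proof -
      have "card L = k" using IJKL(4) unfolding kidx_def by simp
      then show ?thesis using distinct_card[OF ys(1)] ys(2) by simp
    qed
    define h0 where "h0 = (\<lambda>z. minor (\<lambda>a c. g a (snd c) z) K L)"
    have h0D: "h0 z = D (\<lambda>a j. g a j z) xs (map snd ys)" for z
      unfolding h0_def minor_D xs_def[symmetric] ys_def[symmetric]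
      using D_map[of ys xs "\<lambda>a j. g a j z" snd] lys lxs by simp
    have h0N: "h0 \<in> ?N"
    proof (cases "distinct (map snd ys)")
      case False
      have "h0 z = 0" for z
        using h0D[of z] D_repeat[of "map snd ys" xs "\<lambda>a j. g a j z"] False lxs lys by simp
      then have "h0 = (\<lambda>_. 0)" by (simp add: fun_eq_iff)
      then show ?thesis using gi_zero unfolding Ik_def by simp
    next
      case True
      define J' where "J' = snd ` L"
      have finJ': "finite J'" unfolding J'_def using finL by simp
      have J'k: "J' \<in> kidx k {..<r}"
      proof -
        have "J' = set (map snd ys)" unfolding J'_def using ys by simp
        then have "card J' = k" using distinct_card[OF True] lys by simp
        moreover have "J' \<subseteq> {..<r}" unfolding J'_def using IJKL(4) unfolding kidx_def by auto
        ultimately show ?thesis unfolding kidx_def by simp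
      qed
      define zs where "zs = enum_set J'"
      have zs: "distinct zs" "set zs = J'" using enum_set[OF finJ'] unfolding zs_def by auto
      have lzs: "length zs = k"
      proof -
        have "card J' = k" using J'k unfolding kidx_def by simp
        then show ?thesis using distinct_card[OF zs(1)] zs(2) by simp
      qed
      have "set (map snd ys) = set zs" using zs ys unfolding J'_def by simp
      then obtain \<tau> where \<tau>: "\<tau> permutes {..<length zs}" "\<forall>b<length zs. map snd ys ! b = zs ! \<tau> b"
        using perm_exists[OF True zs(1)] by blast
      have "h0 z = of_int (sign \<tau>) * minor (\<lambda>a j. g a j z) K J'" for z
        unfolding h0D minor_D xs_def[symmetric] zs_def[symmetric]
        by (rule D_perm) (use \<tau> lxs lys lzs in auto)
      then have "h0 = (\<lambda>z. of_int (sign \<tau>) * minor (\<lambda>a j. g a j z) K J')" by auto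
      then show ?thesis using gi_mult[OF germ_const Ngen[OF IJKL(3) J'k, unfolded Ik_def]]
        unfolding Ik_def by simp
    qed
    define \<phi> where "\<phi> t = fst (ys ! t)" for t
    define i0 where "i0 = \<phi> (k - 1)"
    define P where "P w = (\<Prod>t<k - 1. fst w $ \<phi> t - snd w $ \<phi> t)" for w :: "(complex^'n) \<times> (complex^'n)"
    have Mt: "minor (\<lambda>a c. Mtilde g a c w) K L = P w * (fst w $ i0 - snd w $ i0) * h0 (snd w)" for w
    proof -
      have "minor (\<lambda>a c. Mtilde g a c w) K L
          = D (\<lambda>a c. (fst w $ fst c - snd w $ fst c) * g a (snd c) (snd w)) xs ys"
        unfolding minor_D Mtilde_def xs_def ys_def ..
      also have "\<dots> = (\<Prod>a<k. fst w $ \<phi> a - snd w $ \<phi> a) * h0 (snd w)"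
        using D_scale[of ys xs "\<lambda>c. fst w $ fst c - snd w $ fst c" "\<lambda>a c. g a (snd c) (snd w)"] lxs lys
        unfolding h0_def minor_D xs_def[symmetric] ys_def[symmetric] \<phi>_def by simp
      also have "(\<Prod>a<k. fst w $ \<phi> a - snd w $ \<phi> a) = P w * (fst w $ i0 - snd w $ i0)"
      proof -
        have "k = Suc (k - 1)" using assms(4) by simp
        then have "(\<Prod>a<k. fst w $ \<phi> a - snd w $ \<phi> a) = (\<Prod>a<Suc (k - 1). fst w $ \<phi> a - snd w $ \<phi> a)"
          by simp
        then show ?thesis unfolding P_def i0_def by simp
      qed
      finally show ?thesis .
    qed
    define f1 where "f1 = (\<lambda>z::complex^'n. z $ i0 * m1 z)"
    define h1 where "h1 = (\<lambda>z::complex^'n. z $ i0 * h0 z)"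
    have f1N: "f1 \<in> ?N" unfolding f1_def Ik_def by (rule gi_mult[OF germ_coord m1N[unfolded Ik_def]])
    have h1N: "h1 \<in> ?N" unfolding h1_def Ik_def by (rule gi_mult[OF germ_coord h0N[unfolded Ik_def]])
    define E1 where "E1 w = P w * (f1 (fst w) * h0 (snd w) - f1 (snd w) * h0 (fst w))" for w
    define E2 where "E2 w = P w * (m1 (fst w) * h1 (snd w) - m1 (snd w) * h1 (fst w))" for w
    define E3 where "E3 w = P w * (m1 (fst w) * h0 (snd w) - m1 (snd w) * h0 (fst w))" for w
    have E1: "E1 \<in> ?J" unfolding E1_def P_def
      by (rule gi_gen, rule CollectI, rule exI[of _ \<phi>], rule exI[of _ f1], rule exI[of _ h0]) (use f1N h0N in simp)
    have E2: "E2 \<in> ?J" unfolding E2_def P_def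
      by (rule gi_gen, rule CollectI, rule exI[of _ \<phi>], rule exI[of _ m1], rule exI[of _ h1]) (use m1N h1N in simp)
    have E3: "E3 \<in> ?J" unfolding E3_def P_def
      by (rule gi_gen, rule CollectI, rule exI[of _ \<phi>], rule exI[of _ m1], rule exI[of _ h0]) (use m1N h0N in simp)
    have sum: "(\<lambda>w. (1/2) * E1 w + ((- 1/2) * E2 w + ((1/2) * (fst w $ i0 - snd w $ i0)) * E3 w)) \<in> ?J"
      by (intro gi_add gi_mult[OF germ_const] E1 E2 gi_mult[OF germ_mult[OF germ_const germ_delta]] E3)
    have "F = (\<lambda>w. (1/2) * E1 w + ((- 1/2) * E2 w + ((1/2) * (fst w $ i0 - snd w $ i0)) * E3 w))"
    proof
      fix w
      show "F w = (1/2) * E1 w + ((- 1/2) * E2 w + ((1/2) * (fst w $ i0 - snd w $ i0)) * E3 w)"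
        unfolding F Mt m1_def E1_def E2_def E3_def f1_def h1_def
        by (rule key_identity)
    qed
    then show "F \<in> ?J" using sum by simp
  qed
qed

end
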